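(* Let ${\bf r}=(r_0,r_1,\dots)$ be a finitely supported sequence of nonnegative integers with $n=\sum_{d\ge1}r_d\ge1$ and $\ell=-\sum_{d\ge0}(d-1)r_d\ge1$, let $k\ge0$ be an integer, and let ${\bf S}\in V_{\bf r}$. Then $$|\mathcal{CF}_{{\bf r},k,{\bf S}}|=\ell\,1^{r_1}2^{r_2}3^{r_3}\cdots\prod_{i=1}^{n-1}\big(r_0+i(1+k)\big).$$
   Context: A plane tree is an unlabelled rooted tree in which the children of every vertex are linearly ordered; a plane forest is a finite linearly ordered sequence of plane trees. For vertices $u,v$ in a tree, $v$ is a descendant of $u$ if $u$ lies on the path from the root to $v$ (so $u$ is a descendant of itself). The degree $d_v$ is the number of children of $v$; $v$ is internal if $d_v\ge1$. $I(F)$ is the set of internal vertices of $F$. A plane forest has type ${\bf r}$ if it has exactly $r_i$ vertices of degree $i$ for all $i\ge0$. A labelled forest is a plane forest $F$ together with a bijection (labelling) $I(F)\to[n]$. An internal vertex $v$ of a labelled forest is proper if no internal descendant of $v$ has a smaller label than $v$, and improper otherwise. Fix colors $c_1,c_2,\dots$ and distinct special colors $c_1',c_2',\dots$. A proper $k$-coloring of a labelled forest assigns to each internal vertex $v$ a color, taken from $\{c_1,\dots,c_{d_v}\}$ if $v$ is proper and from $\{c_1,\dots,c_{d_v}\}\cup\{c_1',\dots,c_k'\}$ if $v$ is improper. A $k$-colored labelled forest is a labelled forest together with a proper $k$-coloring; $\mathcal{CF}_{{\bf r},k}$ is the set of $k$-colored labelled forests whose underlying plane forest has type ${\bf r}$.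 $V_{\bf r}$ is the set of sequences ${\bf S}=(S_1,S_2,\dots)$ of pairwise disjoint subsets of $[n]$ with union $[n]$ and $|S_i|=r_i$ for all $i\ge1$. For ${\bf S}\in V_{\bf r}$, $\mathcal{CF}_{{\bf r},k,{\bf S}}$ is the set of forests in $\mathcal{CF}_{{\bf r},k}$ in which every internal vertex $v$ has its label in $S_{d_v}$. *)

theory Defs
  imports Main
begin

text \<open>Internal vertices carry (label, colour); leaves carry the fixed dummy decoration
  (0, Col 0), so that a decorated forest is exactly a plane forest together with a
  labelling of its internal vertices and a colouring.\<close>

datatype 'a tree = Node 'a "'a tree list"

fun root :: "'a tree \<Rightarrow> 'a" where "root (Node a ts) = a"
fun children :: "'a tree \<Rightarrow> 'a tree list" where "children (Node a ts) = ts"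

text \<open>All vertices of a tree (each vertex represented by the subtree rooted at it),
  in preorder; the descendants of a vertex v are the vertices of subtrees v.\<close>
fun subtrees :: "'a tree \<Rightarrow> 'a tree list" where
  "subtrees (Node a ts) = Node a ts # concat (map subtrees ts)"

text \<open>Colours: Col i is c_i, Spec j is the special colour c'_j.\<close>
datatype color = Col nat | Spec nat

type_synonym cforest = "(nat \<times> color) tree list"

definition deg :: "'a tree \<Rightarrow> nat" where "deg t = length (children t)"

definition forest_vertices :: "'a tree list \<Rightarrow> 'a tree list" where
  "forest_vertices F = concat (map subtrees F)"

definition internal_vertices :: "'a tree list \<Rightarrow> 'a tree list" where
  "internal_vertices F = filter (\<lambda>t. deg t \<ge> 1) (forest_vertices F)"

definition label :: "(nat \<times> color) tree \<Rightarrow> nat" where "label t = fst (root t)"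
definition colour :: "(nat \<times> color) tree \<Rightarrow> color" where "colour t = snd (root t)"

definition has_type :: "(nat \<Rightarrow> nat) \<Rightarrow> 'a tree list \<Rightarrow> bool" where
  "has_type r F \<longleftrightarrow> (\<forall>i. length (filter (\<lambda>t. deg t = i) (forest_vertices F)) = r i)"

definition n_of :: "(nat \<Rightarrow> nat) \<Rightarrow> nat" where
  "n_of r = (\<Sum>d\<in>{d. 1 \<le> d \<and> r d \<noteq> 0}. r d)"

definition ell_of :: "(nat \<Rightarrow> nat) \<Rightarrow> int" where
  "ell_of r = - (\<Sum>d\<in>{d. r d \<noteq> 0}. (int d - 1) * int (r d))"

definition is_labelled :: "nat \<Rightarrow> cforest \<Rightarrow> bool" where
  "is_labelled n F \<longleftrightarrow> distinct (map label (internal_vertices F))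
      \<and> set (map label (internal_vertices F)) = {1..n}"

definition leaves_dummy :: "cforest \<Rightarrow> bool" where
  "leaves_dummy F \<longleftrightarrow> (\<forall>t\<in>set (forest_vertices F). deg t = 0 \<longrightarrow> root t = (0, Col 0))"

definition proper :: "(nat \<times> color) tree \<Rightarrow> bool" where
  "proper v \<longleftrightarrow> (\<forall>w\<in>set (subtrees v). deg w \<ge> 1 \<longrightarrow> \<not> label w < label v)"

definition allowed_colours :: "nat \<Rightarrow> (nat \<times> color) tree \<Rightarrow> color set" where
  "allowed_colours k v =
     {Col i | i. 1 \<le> i \<and> i \<le> deg v}
     \<union> (if proper v then {} else {Spec j | j. 1 \<le> j \<and> j \<le> k})"

definition CF :: "(nat \<Rightarrow> nat) \<Rightarrow> nat \<Rightarrow> cforest set" where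
  "CF r k = {F. has_type r F \<and> is_labelled (n_of r) F \<and> leaves_dummy F
       \<and> (\<forall>v\<in>set (internal_vertices F). colour v \<in> allowed_colours k v)}"

definition CFS :: "(nat \<Rightarrow> nat) \<Rightarrow> nat \<Rightarrow> (nat \<Rightarrow> nat set) \<Rightarrow> cforest set" where
  "CFS r k S = {F \<in> CF r k. \<forall>v\<in>set (internal_vertices F). label v \<in> S (deg v)}"

text \<open>V_r: sequences (S_1, S_2, ...) (the value S 0 is irrelevant).\<close>
definition V :: "(nat \<Rightarrow> nat) \<Rightarrow> (nat \<Rightarrow> nat set) set" where
  "V r = {S. (\<forall>i j. 1 \<le> i \<longrightarrow> 1 \<le> j \<longrightarrow> i \<noteq> j \<longrightarrow> S i \<inter> S j = {})
            \<and> (\<Union>i\<in>{1..}. S i) = {1..n_of r}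
            \<and> (\<forall>i\<ge>1. card (S i) = r i)}"

end

theory Submission
  imports Defs
begin


lemma fv_Nil[simp]: "forest_vertices [] = []" by (simp add: forest_vertices_def)
lemma fv_Cons[simp]: "forest_vertices (t # ts) = subtrees t @ forest_vertices ts"
  by (simp add: forest_vertices_def)
lemma fv_append[simp]: "forest_vertices (xs @ ys) = forest_vertices xs @ forest_vertices ys"
  by (simp add: forest_vertices_def)
lemma subtrees_Node[simp]: "subtrees (Node a ts) = Node a ts # forest_vertices ts"
  by (simp add: forest_vertices_def)
declare subtrees.simps[simp del]
lemma deg_Node[simp]: "deg (Node a ts) = length ts" by (simp add: deg_def)
lemma label_Node[simp]: "label (Node (x,c) ts) = x" by (simp add: label_def)
lemma colour_Node[simp]: "colour (Node (x,c) ts) = c" by (simp add: colour_def)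

lemma iv_Nil[simp]: "internal_vertices [] = []" by (simp add: internal_vertices_def)
lemma iv_append[simp]: "internal_vertices (xs @ ys) = internal_vertices xs @ internal_vertices ys"
  by (simp add: internal_vertices_def)
lemma iv_Cons_Node[simp]: "internal_vertices (Node a cs # Q) =
   (if cs = [] then internal_vertices Q else Node a cs # internal_vertices cs @ internal_vertices Q)"
  by (cases cs) (auto simp: internal_vertices_def)

definition ivl :: "cforest \<Rightarrow> nat list" where "ivl F = map label (internal_vertices F)"

lemma ivl_Nil[simp]: "ivl [] = []" by (simp add: ivl_def)
lemma ivl_append[simp]: "ivl (xs @ ys) = ivl xs @ ivl ys" by (simp add: ivl_def)
lemma ivl_Cons_Node[simp]: "ivl (Node (x,c) cs # Q) = (if cs = [] then ivl Q else x # ivl cs @ ivl Q)"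
  by (simp add: ivl_def)

lemma ivl_Cons: "ivl (t # F) = ivl [t] @ ivl F"
  using ivl_append[of "[t]" F] by simp

lemma ivl_concat: "ivl F = concat (map (\<lambda>t. ivl [t]) F)"
  by (induction F) (simp, subst ivl_Cons, simp)

lemma ivl_mem: "t \<in> set F \<Longrightarrow> set (ivl [t]) \<subseteq> set (ivl F)"
  by (subst (2) ivl_concat) auto

lemma ivl_ex: "y \<in> set (ivl F) \<Longrightarrow> \<exists>j<length F. y \<in> set (ivl [F ! j])"
proof -
  assume "y \<in> set (ivl F)"
  then obtain t where "t \<in> set F" "y \<in> set (ivl [t])"
    by (subst (asm) ivl_concat) auto
  then show ?thesis by (metis in_set_conv_nth)
qed

lemma ivl_uniq:
  assumes "distinct (ivl F)" "a < length F" "b < length F"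
    "y \<in> set (ivl [F ! a])" "y \<in> set (ivl [F ! b])"
  shows "a = b"
proof (rule ccontr)
  assume ne: "a \<noteq> b"
  have main: "False" if "distinct (ivl F)" "a < length F" "b < length F"
    "y \<in> set (ivl [F ! a])" "y \<in> set (ivl [F ! b])" "a < b" for a b
  proof -
    have F: "F = take a F @ [F ! a] @ drop (Suc a) F"
      using that(2) id_take_nth_drop by fastforce
    have e1: "drop (Suc a) F ! (b - Suc a) = F ! b" using that(3,6) by simp
    have e2: "b - Suc a < length (drop (Suc a) F)" using that(3,6) by simp
    have "F ! b \<in> set (drop (Suc a) F)" using e1 e2 by (metis nth_mem)
    then have y2: "y \<in> set (ivl (drop (Suc a) F))" using ivl_mem that(5) by blast
    have "distinct (ivl (take a F) @ ivl [F ! a] @ ivl (drop (Suc a) F))"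
      using that(1) F by (metis ivl_append)
    then show False using y2 that(4) by auto
  qed
  show False
  proof (cases "a < b")
    case True then show ?thesis using main assms by blast
  next
    case False then have "b < a" using ne by simp
    then show ?thesis using main assms by blast
  qed
qed

lemma proper_Node: "proper (Node (x,c) cs) \<longleftrightarrow> (\<forall>y\<in>set (ivl cs). \<not> y < x)"
  by (auto simp: proper_def ivl_def internal_vertices_def)

lemma sum_Suc_list: "sum_list (map (\<lambda>t. Suc (f t)) ts) = length ts + sum_list (map f ts)"
  by (induction ts) auto

lemma tree_len: "length (subtrees t) = Suc (sum_list (map deg (subtrees t)))"
proof (induction t)
  case (Node a ts)
  have "length (forest_vertices ts) = length ts + sum_list (map deg (forest_vertices ts))"
    using Node.IH by (induction ts) auto
  then show ?case by simp
qed

lemma forest_len: "length F + sum_list (map deg (forest_vertices F)) = length (forest_vertices F)"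
proof (induction F)
  case (Cons t F)
  then show ?case using tree_len[of t] by simp
qed simp




definition leafcount :: "cforest \<Rightarrow> nat" where
  "leafcount F = length (filter (\<lambda>t. deg t = 0) (forest_vertices F))"

definition goodF :: "nat \<Rightarrow> (nat \<Rightarrow> nat) \<Rightarrow> nat set \<Rightarrow> nat \<Rightarrow> cforest \<Rightarrow> bool" where
  "goodF k \<delta> L m F \<longleftrightarrow> distinct (ivl F) \<and> set (ivl F) = L
     \<and> (\<forall>v\<in>set (internal_vertices F). deg v = \<delta> (label v))
     \<and> leafcount F = m \<and> leaves_dummy F
     \<and> (\<forall>v\<in>set (internal_vertices F). colour v \<in> allowed_colours k v)"

definition CC :: "nat \<Rightarrow> nat \<Rightarrow> bool \<Rightarrow> color set" where
  "CC k d b = {Col i | i. 1 \<le> i \<and> i \<le> d} \<union> (if b then {} else {Spec j | j. 1 \<le> j \<and> j \<le> k})"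

lemma allowed_Node: "allowed_colours k (Node (x,c) cs) = CC k (length cs) (proper (Node (x,c) cs))"
  by (simp add: allowed_colours_def CC_def)

lemma CC_fin: "finite (CC k d b)" and card_CC: "card (CC k d b) = d + (if b then 0 else k)"
proof -
  have e1: "{Col i | i. 1 \<le> i \<and> i \<le> d} = Col ` {1..d}" by auto
  have e2: "{Spec i | i. 1 \<le> i \<and> i \<le> k} = Spec ` {1..k}" by auto
  have c1: "card (Col ` {1..d}) = d" by (simp add: card_image inj_on_def)
  have c2: "card (Spec ` {1..k}) = k" by (simp add: card_image inj_on_def)
  show "finite (CC k d b)" unfolding CC_def e1 e2 by simp
  show "card (CC k d b) = d + (if b then 0 else k)"
  proof (cases b)
    case True then show ?thesis unfolding CC_def e1 e2 using c1 by simp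
  next
    case False
    have "card (Col ` {1..d} \<union> Spec ` {1..k}) = card (Col ` {1..d}) + card (Spec ` {1..k})"
      by (rule card_Un_disjoint) auto
    then have "card (Col ` {1..d} \<union> Spec ` {1..k}) = d + k" using c1 c2 by simp
    then show ?thesis unfolding CC_def e1 e2 using False by simp
  qed
qed

lemma leafcount_glue: "cs \<noteq> [] \<Longrightarrow> leafcount (P @ Node a cs # Q) = leafcount (P @ cs @ Q)"
  by (simp add: leafcount_def)

lemma glue:
  assumes "cs \<noteq> []"
  shows "goodF k \<delta> L m (P @ Node (x,c) cs # Q) \<longleftrightarrow>
     (x \<in> L \<and> x \<notin> set (ivl (P @ cs @ Q)) \<and> goodF k \<delta> (L - {x}) m (P @ cs @ Q)
       \<and> length cs = \<delta> x \<and> c \<in> allowed_colours k (Node (x,c) cs))"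
proof -
  let ?F = "P @ Node (x,c) cs # Q" and ?G = "P @ cs @ Q"
  have i1: "ivl ?F = ivl P @ x # ivl cs @ ivl Q" using assms by simp
  have i2: "ivl ?G = ivl P @ ivl cs @ ivl Q" by simp
  have d: "distinct (ivl ?F) \<longleftrightarrow> distinct (ivl ?G) \<and> x \<notin> set (ivl ?G)"
    unfolding i1 i2 by auto
  have s: "set (ivl ?F) = insert x (set (ivl ?G))" unfolding i1 i2 by auto
  have v: "set (internal_vertices ?F) = insert (Node (x,c) cs) (set (internal_vertices ?G))"
    using assms by auto
  have lc: "leafcount ?F = leafcount ?G" using assms by (rule leafcount_glue)
  have fv: "set (forest_vertices ?F) = insert (Node (x,c) cs) (set (forest_vertices ?G))"
    by auto
  have ld: "leaves_dummy ?F \<longleftrightarrow> leaves_dummy ?G"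
    unfolding leaves_dummy_def fv using assms by auto
  have sL: "x \<notin> set (ivl ?G) \<Longrightarrow> (insert x (set (ivl ?G)) = L \<longleftrightarrow> x \<in> L \<and> set (ivl ?G) = L - {x})"
    by auto
  show ?thesis
    unfolding goodF_def d s v lc ld
    using sL by auto
qed

lemma sum_list_filter_pos: "sum_list (map deg (filter (\<lambda>t. 1 \<le> deg t) xs)) = sum_list (map deg xs)"
  by (induction xs) auto

lemma good_len:
  assumes "goodF k \<delta> L m F"
  shows "length F + sum \<delta> L = m + card L"
proof -
  have dist: "distinct (ivl F)" and sL: "set (ivl F) = L"
    and dg: "\<forall>v\<in>set (internal_vertices F). deg v = \<delta> (label v)"
    and lc: "leafcount F = m" using assms by (auto simp: goodF_def)
  have "sum_list (map deg (forest_vertices F)) = sum_list (map deg (internal_vertices F))"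
    unfolding internal_vertices_def by (rule sum_list_filter_pos[symmetric])
  also have "map deg (internal_vertices F) = map \<delta> (ivl F)"
    unfolding ivl_def using dg by simp
  also have "sum_list (map \<delta> (ivl F)) = sum \<delta> L"
    using dist sL by (simp add: sum_list_distinct_conv_sum_set)
  finally have e1: "sum_list (map deg (forest_vertices F)) = sum \<delta> L" .
  have "length (forest_vertices F) = length (filter (\<lambda>t. deg t = 0) (forest_vertices F))
      + length (filter (\<lambda>t. \<not> deg t = 0) (forest_vertices F))"
    by (rule sum_length_filter_compl[symmetric])
  also have "filter (\<lambda>t. \<not> deg t = 0) (forest_vertices F) = internal_vertices F"
    unfolding internal_vertices_def by (rule filter_cong) auto
  also have "length (internal_vertices F) = card L"
    using dist sL by (metis distinct_card ivl_def length_map)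
  finally have e2: "length (forest_vertices F) = m + card L" using lc by (simp add: leafcount_def)
  show ?thesis using forest_len[of F] e1 e2 by simp
qed

definition leafF :: cforest where "leafF = [Node (0, Col 0) []]"

lemma no_internal:
  "internal_vertices F = [] \<Longrightarrow> leaves_dummy F \<Longrightarrow> F = replicate (leafcount F) (Node (0, Col 0) [])"
proof (induction F)
  case Nil then show ?case by (simp add: leafcount_def)
next
  case (Cons t F)
  obtain a cs where t: "t = Node a cs" by (cases t)
  have cs: "cs = []" using Cons.prems(1) t by (auto split: if_splits)
  have ivF: "internal_vertices F = []" using Cons.prems(1) t cs by simp
  have ldF: "leaves_dummy F" using Cons.prems(2) t cs by (auto simp: leaves_dummy_def)
  have a: "a = (0, Col 0)" using Cons.prems(2) t cs by (auto simp: leaves_dummy_def)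
  have "leafcount (t # F) = Suc (leafcount F)" using t cs by (simp add: leafcount_def)
  then show ?case using Cons.IH[OF ivF ldF] t cs a by simp
qed

lemma fv_rep: "forest_vertices (replicate m (Node (0, Col 0) [])) = replicate m (Node (0, Col 0) [])"
  by (induction m) auto

lemma iv_rep: "internal_vertices (replicate m (Node (0, Col 0) [])) = []"
  by (induction m) auto

lemma good_empty: "{F. goodF k \<delta> {} m F} = {replicate m (Node (0, Col 0) [])}"
proof (intro set_eqI iffI)
  fix F :: cforest assume "F \<in> {F. goodF k \<delta> {} m F}"
  then have g: "goodF k \<delta> {} m F" by simp
  then have "internal_vertices F = []" "leaves_dummy F" "leafcount F = m"
    by (auto simp: goodF_def ivl_def)
  then show "F \<in> {replicate m (Node (0, Col 0) [])}" using no_internal by fastforce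
next
  fix F :: cforest assume "F \<in> {replicate m (Node (0, Col 0) [])}"
  then have F: "F = replicate m (Node (0, Col 0) [])" by simp
  show "F \<in> {F. goodF k \<delta> {} m F}"
    unfolding F by (simp add: goodF_def ivl_def iv_rep leafcount_def fv_rep leaves_dummy_def)
qed

definition insF :: "nat \<Rightarrow> nat \<Rightarrow> color \<Rightarrow> nat \<Rightarrow> cforest \<Rightarrow> cforest" where
  "insF j x c d G = take j G @ Node (x,c) (take d (drop j G)) # drop (j+d) G"

lemma insF_parts:
  assumes "j + d \<le> length G"
  shows "take j (insF j x c d G) = take j G"
    "insF j x c d G ! j = Node (x,c) (take d (drop j G))"
    "drop (Suc j) (insF j x c d G) = drop (j+d) G"
    "length (take d (drop j G)) = d"
  using assms by (auto simp: insF_def nth_append)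

lemma split3: "G = take j G @ take d (drop j G) @ drop (j+d) G"
  by (metis append_take_drop_id drop_drop add.commute)

lemma insF_inj:
  assumes "j + d \<le> length G" "j + d' \<le> length G'"
    "insF j x c d G = insF j x' c' d' G'"
  shows "x = x' \<and> c = c' \<and> d = d' \<and> G = G'"
proof -
  have n: "Node (x,c) (take d (drop j G)) = Node (x',c') (take d' (drop j G'))"
    using insF_parts(2)[OF assms(1), of x c] insF_parts(2)[OF assms(2), of x' c'] assms(3) by simp
  then have xc: "x = x'" "c = c'" and t: "take d (drop j G) = take d' (drop j G')" by auto
  have dd: "d = d'" using t assms(1,2) by (metis insF_parts(4))
  have "take j G = take j G'"
    using insF_parts(1)[OF assms(1), of x c] insF_parts(1)[OF assms(2), of x' c'] assms(3) by simp
  moreover have "drop (j+d) G = drop (j+d') G'"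
    using insF_parts(3)[OF assms(1), of x c] insF_parts(3)[OF assms(2), of x' c'] assms(3) by simp
  ultimately have "G = G'" using t dd split3[of G j d] split3[of G' j d'] by metis
  then show ?thesis using xc dd by simp
qed




definition AA :: "nat \<Rightarrow> (nat \<Rightarrow> nat) \<Rightarrow> nat set \<Rightarrow> nat \<Rightarrow> cforest set" where
  "AA k \<delta> L m = {F. goodF k \<delta> L m F}"

definition AJ :: "nat \<Rightarrow> (nat \<Rightarrow> nat) \<Rightarrow> nat set \<Rightarrow> nat \<Rightarrow> nat \<Rightarrow> cforest set" where
  "AJ k \<delta> L m j = {F. goodF k \<delta> L m F \<and> j < length F \<and> Min L \<in> set (ivl [F ! j])}"

definition BB :: "nat \<Rightarrow> (nat \<Rightarrow> nat) \<Rightarrow> nat set \<Rightarrow> nat \<Rightarrow> nat \<Rightarrow> nat \<Rightarrow> cforest set" where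
  "BB k \<delta> L m j x = (if x = Min L then AA k \<delta> (L - {x}) m
      else (\<Union>i<\<delta> x. AJ k \<delta> (L - {x}) m (j+i)))"

lemma AJ_disj:
  assumes "a \<noteq> b" shows "AJ k \<delta> L m a \<inter> AJ k \<delta> L m b = {}"
  using assms ivl_uniq by (auto simp: AJ_def goodF_def)

lemma AA_Union:
  assumes "finite L" "L \<noteq> {}"
  shows "AA k \<delta> L m = (\<Union>j<m + card L - sum \<delta> L. AJ k \<delta> L m j)"
proof (intro set_eqI iffI)
  fix F assume "F \<in> AA k \<delta> L m"
  then have g: "goodF k \<delta> L m F" by (simp add: AA_def)
  have len: "length F = m + card L - sum \<delta> L" using good_len[OF g] by simp
  have "Min L \<in> set (ivl F)" using g assms by (simp add: goodF_def)
  then obtain j where "j < length F" "Min L \<in> set (ivl [F ! j])" using ivl_ex by blast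
  then show "F \<in> (\<Union>j<m + card L - sum \<delta> L. AJ k \<delta> L m j)"
    using g len by (auto simp: AJ_def)
next
  fix F assume "F \<in> (\<Union>j<m + card L - sum \<delta> L. AJ k \<delta> L m j)"
  then show "F \<in> AA k \<delta> L m" by (auto simp: AJ_def AA_def)
qed

lemma Min_remove: "finite L \<Longrightarrow> x \<in> L \<Longrightarrow> x \<noteq> Min L \<Longrightarrow> Min (L - {x}) = Min L"
  by (rule Min_eqI) (auto intro: Min_in)

lemma BB_good:
  assumes fin: "finite L" and x: "x \<in> L" and jl: "j + sum \<delta> L < m + card L"
    and G: "G \<in> BB k \<delta> L m j x"
  shows "goodF k \<delta> (L - {x}) m G" "j + \<delta> x \<le> length G"
proof -
  show g: "goodF k \<delta> (L - {x}) m G"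
    using G by (auto simp: BB_def AA_def AJ_def split: if_splits)
  have "length G + sum \<delta> (L - {x}) = m + card (L - {x})" by (rule good_len[OF g])
  moreover have "sum \<delta> L = \<delta> x + sum \<delta> (L - {x})" using fin x by (rule sum.remove)
  moreover have "card (L - {x}) + 1 = card L" using fin x
    by (metis card_Diff1_less_iff card_Suc_Diff1 Suc_eq_plus1)
  ultimately show "j + \<delta> x \<le> length G" using jl by linarith
qed

lemma decomp:
  assumes fin: "finite L" and ne: "L \<noteq> {}" and pos: "\<forall>x\<in>L. 1 \<le> \<delta> x"
    and jl: "j + sum \<delta> L < m + card L"
  shows "AJ k \<delta> L m j = (\<lambda>(x,c,G). insF j x c (\<delta> x) G) `
           (SIGMA x:L. SIGMA c:CC k (\<delta> x) (x = Min L). BB k \<delta> L m j x)"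
proof (intro set_eqI iffI)
  fix F assume "F \<in> AJ k \<delta> L m j"
  then have g: "goodF k \<delta> L m F" and jF: "j < length F" and mn: "Min L \<in> set (ivl [F ! j])"
    by (auto simp: AJ_def)
  obtain x c cs where t: "F ! j = Node (x,c) cs" by (metis surj_pair tree.exhaust)
  have csne: "cs \<noteq> []" using mn t by auto
  define P where "P = take j F"
  define Q where "Q = drop (Suc j) F"
  define G where "G = P @ cs @ Q"
  have lP: "length P = j" using jF by (simp add: P_def)
  have F: "F = P @ Node (x,c) cs # Q" unfolding P_def Q_def using jF t
    by (metis id_take_nth_drop)
  have gl: "x \<in> L" "x \<notin> set (ivl G)" "goodF k \<delta> (L - {x}) m G" "length cs = \<delta> x"
    "c \<in> allowed_colours k (Node (x,c) cs)"
    using g unfolding F G_def glue[OF csne] by auto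
  have sG: "set (ivl G) = L - {x}" using gl(3) by (simp add: goodF_def)
  have csG: "set (ivl cs) \<subseteq> set (ivl G)" by (auto simp: G_def)
  have prp: "proper (Node (x,c) cs) \<longleftrightarrow> x = Min L"
  proof
    assume pr: "proper (Node (x,c) cs)"
    show "x = Min L"
    proof (rule ccontr)
      assume "x \<noteq> Min L"
      then have "Min L \<in> set (ivl cs)" using mn t csne by simp
      moreover have "Min L < x" using \<open>x \<noteq> Min L\<close> gl(1) fin by (simp add: order_less_le)
      ultimately show False using pr by (auto simp: proper_Node)
    qed
  next
    assume "x = Min L"
    then show "proper (Node (x,c) cs)" using csG sG Min_le[OF fin] by (fastforce simp: proper_Node)
  qed
  have cC: "c \<in> CC k (\<delta> x) (x = Min L)" using gl(5) gl(4) prp by (simp add: allowed_Node)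
  have GB: "G \<in> BB k \<delta> L m j x"
  proof (cases "x = Min L")
    case True then show ?thesis using gl(3) by (simp add: BB_def AA_def)
  next
    case False
    then have "Min L \<in> set (ivl cs)" using mn t csne by simp
    then obtain i where i: "i < length cs" "Min L \<in> set (ivl [cs ! i])" using ivl_ex by blast
    have Gi: "G ! (j+i) = cs ! i" using i lP by (simp add: G_def nth_append)
    have jiG: "j + i < length G" using i lP by (simp add: G_def)
    have "Min (L - {x}) = Min L" using Min_remove fin gl(1) False by blast
    then have "G \<in> AJ k \<delta> (L - {x}) m (j+i)" using gl(3) jiG Gi i by (simp add: AJ_def)
    then show ?thesis using False i(1) gl(4) by (auto simp: BB_def)
  qed
  have "insF j x c (\<delta> x) G = F"
    unfolding insF_def G_def F using lP gl(4) by simp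
  then show "F \<in> (\<lambda>(x,c,G). insF j x c (\<delta> x) G) `
           (SIGMA x:L. SIGMA c:CC k (\<delta> x) (x = Min L). BB k \<delta> L m j x)"
    using gl(1) cC GB by (auto intro!: image_eqI[where x="(x,c,G)"])
next
  fix F assume "F \<in> (\<lambda>(x,c,G). insF j x c (\<delta> x) G) `
           (SIGMA x:L. SIGMA c:CC k (\<delta> x) (x = Min L). BB k \<delta> L m j x)"
  then obtain x c G where x: "x \<in> L" and cC: "c \<in> CC k (\<delta> x) (x = Min L)"
    and GB: "G \<in> BB k \<delta> L m j x" and F0: "F = insF j x c (\<delta> x) G" by auto
  have g: "goodF k \<delta> (L - {x}) m G" and lG: "j + \<delta> x \<le> length G"
    using BB_good[OF fin x jl GB] by auto
  define P where "P = take j G"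
  define cs where "cs = take (\<delta> x) (drop j G)"
  define Q where "Q = drop (j + \<delta> x) G"
  have lcs: "length cs = \<delta> x" using lG by (simp add: cs_def)
  have csne: "cs \<noteq> []" using lcs pos x by auto
  have F: "F = P @ Node (x,c) cs # Q" by (simp add: F0 insF_def P_def cs_def Q_def)
  have G: "G = P @ cs @ Q" unfolding P_def cs_def Q_def by (rule split3)
  have sG: "set (ivl G) = L - {x}" using g by (simp add: goodF_def)
  have csG: "set (ivl cs) \<subseteq> set (ivl G)" by (subst G) auto
  have mcs: "Min L \<in> set (ivl cs)" if ne: "x \<noteq> Min L"
  proof -
    obtain i where i: "i < \<delta> x" "G \<in> AJ k \<delta> (L - {x}) m (j+i)"
      using GB ne by (auto simp: BB_def)
    have "Min (L - {x}) = Min L" using Min_remove fin x ne by blast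
    then have "Min L \<in> set (ivl [G ! (j+i)])" using i by (simp add: AJ_def)
    moreover have "G ! (j+i) = cs ! i" using i lG by (simp add: cs_def)
    moreover have "cs ! i \<in> set cs" using i lcs by simp
    ultimately show ?thesis using ivl_mem[of "cs ! i" cs] by auto
  qed
  have prp: "proper (Node (x,c) cs) \<longleftrightarrow> x = Min L"
  proof
    assume pr: "proper (Node (x,c) cs)"
    show "x = Min L"
    proof (rule ccontr)
      assume ne: "x \<noteq> Min L"
      have "Min L < x" using ne x fin by (simp add: order_less_le)
      then show False using pr mcs[OF ne] by (auto simp: proper_Node)
    qed
  next
    assume "x = Min L"
    then show "proper (Node (x,c) cs)" using csG sG Min_le[OF fin] by (fastforce simp: proper_Node)
  qed
  have ca: "c \<in> allowed_colours k (Node (x,c) cs)" using cC lcs prp by (simp add: allowed_Node)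
  have gF: "goodF k \<delta> L m F"
    unfolding F glue[OF csne] using x sG g lcs ca G by auto
  have jF: "j < length F" using F lG by (simp add: P_def)
  have Fj: "F ! j = Node (x,c) cs" using F lG by (simp add: P_def nth_append)
  have "Min L \<in> set (ivl [F ! j])"
    using Fj csne mcs by (cases "x = Min L") auto
  then show "F \<in> AJ k \<delta> L m j" using gF jF by (simp add: AJ_def)
qed




definition PP :: "nat \<Rightarrow> nat \<Rightarrow> nat \<Rightarrow> nat" where
  "PP k m n = (\<Prod>i\<in>{1..n-1}. m + i * (1 + k))"

lemma PP_step: "n \<ge> 2 \<Longrightarrow> PP k m n = PP k m (n - 1) * (m + (n - 1) * (1 + k))"
proof -
  assume "n \<ge> 2"
  then obtain q where q: "n - 1 = Suc q" "n - 1 - 1 = q" by (intro that[of "n - 2"]) auto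
  show ?thesis unfolding PP_def q(1) q(2) by (simp add: q)
qed

lemma mainAJ:
  assumes "finite L" "L \<noteq> {}" "\<forall>x\<in>L. 1 \<le> \<delta> x" "j + sum \<delta> L < m + card L"
  shows "finite (AJ k \<delta> L m j) \<and> card (AJ k \<delta> L m j) = prod \<delta> L * PP k m (card L)"
  using assms
proof (induction "card L" arbitrary: L j rule: less_induct)
  case less
  note fin = less.prems(1) and ne = less.prems(2) and pos = less.prems(3) and jl = less.prems(4)
  define \<mu> where "\<mu> = Min L"
  define n where "n = card L"
  have \<mu>L: "\<mu> \<in> L" using fin ne by (simp add: \<mu>_def)
  have n1: "n \<ge> 1" using fin ne by (simp add: n_def Suc_le_eq card_gt_0_iff)
  have sumx: "sum \<delta> L = \<delta> x + sum \<delta> (L - {x})" if "x \<in> L" for x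
    using fin that by (rule sum.remove)
  have prodx: "prod \<delta> L = \<delta> x * prod \<delta> (L - {x})" if "x \<in> L" for x
    using fin that by (rule prod.remove)
  have cardx: "card (L - {x}) = n - 1" if "x \<in> L" for x
    using fin that by (simp add: n_def)
  have IH: "finite (AJ k \<delta> (L - {x}) m j') \<and>
      card (AJ k \<delta> (L - {x}) m j') = prod \<delta> (L - {x}) * PP k m (n - 1)"
    if "x \<in> L" "L - {x} \<noteq> {}" "j' + sum \<delta> (L - {x}) < m + (n - 1)" for x j'
  proof -
    have "card (L - {x}) < card L" using fin that(1) by (meson card_Diff1_less)
    then show ?thesis using less.hyps[of "L - {x}" j'] fin pos that cardx[OF that(1)] by auto
  qed
  define P' where "P' = PP k m (n - 1)"
  define lp where "lp = m + (n - 1) - sum \<delta> (L - {\<mu>})"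
  have BBx: "finite (BB k \<delta> L m j x) \<and> card (BB k \<delta> L m j x) = \<delta> x * prod \<delta> (L - {x}) * P'"
    if x: "x \<in> L" "x \<noteq> \<mu>" for x
  proof -
    have ne': "L - {x} \<noteq> {}" using \<mu>L x by auto
    have B: "BB k \<delta> L m j x = (\<Union>i\<in>{..<\<delta> x}. AJ k \<delta> (L - {x}) m (j+i))"
      using x by (simp add: BB_def \<mu>_def)
    have each: "finite (AJ k \<delta> (L - {x}) m (j+i)) \<and>
      card (AJ k \<delta> (L - {x}) m (j+i)) = prod \<delta> (L - {x}) * P'" if "i < \<delta> x" for i
    proof -
      have "j + i + sum \<delta> (L - {x}) < m + (n - 1)"
        using jl sumx[OF x(1)] that n1 by (simp add: n_def)
      then show ?thesis using IH[OF x(1) ne'] by (simp add: P'_def)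
    qed
    have "card (BB k \<delta> L m j x) = (\<Sum>i<\<delta> x. card (AJ k \<delta> (L - {x}) m (j+i)))"
      unfolding B by (rule card_UN_disjoint) (use each AJ_disj in auto)
    also have "\<dots> = \<delta> x * (prod \<delta> (L - {x}) * P')" using each by simp
    finally show ?thesis using each B by simp
  qed
  have BB\<mu>: "finite (BB k \<delta> L m j \<mu>) \<and>
     card (BB k \<delta> L m j \<mu>) = (if L - {\<mu>} = {} then 1 else lp * prod \<delta> (L - {\<mu>}) * P')"
  proof (cases "L - {\<mu>} = {}")
    case True
    have "BB k \<delta> L m j \<mu> = AA k \<delta> (L - {\<mu>}) m" by (simp add: BB_def \<mu>_def)
    also have "\<dots> = {replicate m (Node (0, Col 0) [])}"
      unfolding True by (simp add: AA_def good_empty)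
    finally have "BB k \<delta> L m j \<mu> = {replicate m (Node (0, Col 0) [])}" .
    then show ?thesis using True by simp
  next
    case False
    have A: "BB k \<delta> L m j \<mu> = (\<Union>j'\<in>{..<lp}. AJ k \<delta> (L - {\<mu>}) m j')"
      unfolding BB_def \<mu>_def[symmetric] lp_def using AA_Union[of "L - {\<mu>}" k \<delta> m] fin False
        cardx[OF \<mu>L] by simp
    have each: "finite (AJ k \<delta> (L - {\<mu>}) m j') \<and>
      card (AJ k \<delta> (L - {\<mu>}) m j') = prod \<delta> (L - {\<mu>}) * P'" if "j' < lp" for j'
    proof -
      have "j' + sum \<delta> (L - {\<mu>}) < m + (n - 1)" using that by (simp add: lp_def)
      then show ?thesis using IH[OF \<mu>L False] by (simp add: P'_def)
    qed
    have "card (BB k \<delta> L m j \<mu>) = (\<Sum>j'<lp. card (AJ k \<delta> (L - {\<mu>}) m j'))"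
      unfolding A by (rule card_UN_disjoint) (use each AJ_disj in auto)
    also have "\<dots> = lp * (prod \<delta> (L - {\<mu>}) * P')" using each by simp
    finally show ?thesis using each A False by simp
  qed
  have BBfin: "finite (BB k \<delta> L m j x)" if "x \<in> L" for x
    using BBx BB\<mu> that by (cases "x = \<mu>") auto
  define g where "g x = card (CC k (\<delta> x) (x = \<mu>)) * card (BB k \<delta> L m j x)" for x
  let ?S = "SIGMA x:L. SIGMA c:CC k (\<delta> x) (x = Min L). BB k \<delta> L m j x"
  have finS: "finite ?S" using fin BBfin CC_fin by (auto intro!: finite_SigmaI)
  have inj: "inj_on (\<lambda>(x,c,G). insF j x c (\<delta> x) G) ?S"
  proof (rule inj_onI)
    fix a b assume a: "a \<in> ?S" and b: "b \<in> ?S"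
      and e: "(\<lambda>(x,c,G). insF j x c (\<delta> x) G) a = (\<lambda>(x,c,G). insF j x c (\<delta> x) G) b"
    obtain x c G where ax: "a = (x,c,G)" by (cases a) auto
    obtain x' c' G' where bx: "b = (x',c',G')" by (cases b) auto
    have l1: "j + \<delta> x \<le> length G" using a ax BB_good[OF fin _ jl] by auto
    have l2: "j + \<delta> x' \<le> length G'" using b bx BB_good[OF fin _ jl] by auto
    show "a = b" using insF_inj[OF l1 l2] e ax bx by auto
  qed
  have dec: "AJ k \<delta> L m j = (\<lambda>(x,c,G). insF j x c (\<delta> x) G) ` ?S"
    by (rule decomp[OF fin ne pos jl])
  have finA: "finite (AJ k \<delta> L m j)" using dec finS by simp
  have "card (AJ k \<delta> L m j) = card ?S" using dec inj by (simp add: card_image)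
  also have "\<dots> = (\<Sum>x\<in>L. card (SIGMA c:CC k (\<delta> x) (x = \<mu>). BB k \<delta> L m j x))"
    using fin BBfin CC_fin by (simp add: \<mu>_def)
  also have "\<dots> = (\<Sum>x\<in>L. g x)"
    using fin BBfin CC_fin by (intro sum.cong) (auto simp: g_def)
  also have "\<dots> = g \<mu> + (\<Sum>x\<in>L - {\<mu>}. g x)" using fin \<mu>L by (rule sum.remove)
  also have "(\<Sum>x\<in>L - {\<mu>}. g x) = (\<Sum>x\<in>L - {\<mu>}. (\<delta> x + k) * (prod \<delta> L * P'))"
  proof (rule sum.cong)
    fix x assume x: "x \<in> L - {\<mu>}"
    then show "g x = (\<delta> x + k) * (prod \<delta> L * P')"
      using BBx[of x] prodx[of x] by (simp add: g_def card_CC)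
  qed simp
  also have "\<dots> = (sum \<delta> (L - {\<mu>}) + k * (n - 1)) * (prod \<delta> L * P')"
  proof -
    have "(\<Sum>x\<in>L - {\<mu>}. (\<delta> x + k) * (prod \<delta> L * P')) = (\<Sum>x\<in>L - {\<mu>}. \<delta> x + k) * (prod \<delta> L * P')"
      by (simp add: sum_distrib_right)
    also have "(\<Sum>x\<in>L - {\<mu>}. \<delta> x + k) = sum \<delta> (L - {\<mu>}) + k * (n - 1)"
      using cardx[OF \<mu>L] by (simp add: sum.distrib)
    finally show ?thesis .
  qed
  finally have cA: "card (AJ k \<delta> L m j) = g \<mu> + (sum \<delta> (L - {\<mu>}) + k * (n - 1)) * (prod \<delta> L * P')" .
  have "card (AJ k \<delta> L m j) = prod \<delta> L * PP k m n"
  proof (cases "L - {\<mu>} = {}")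
    case True
    then have L: "L = {\<mu>}" using \<mu>L by auto
    then have "n = 1" by (simp add: n_def)
    then show ?thesis using cA BB\<mu> True L by (simp add: g_def card_CC PP_def)
  next
    case False
    have "card (L - {\<mu>}) > 0" using False fin by (simp add: card_gt_0_iff)
    then have n2: "n \<ge> 2" using cardx[OF \<mu>L] by simp
    have g\<mu>: "g \<mu> = lp * (prod \<delta> L * P')"
      using BB\<mu> False prodx[OF \<mu>L] by (simp add: g_def card_CC)
    have s: "lp + sum \<delta> (L - {\<mu>}) = m + (n - 1)"
      using jl sumx[OF \<mu>L] n1 by (simp add: lp_def n_def)
    have "card (AJ k \<delta> L m j) = (lp + sum \<delta> (L - {\<mu>}) + k * (n - 1)) * (prod \<delta> L * P')"
      using cA g\<mu> by (simp add: algebra_simps)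
    also have "\<dots> = prod \<delta> L * PP k m n"
    proof -
      have gen: "(m + q + k * q) * (D * X) = D * (X * (m + q * (1 + k)))" for q D X :: nat
        by (simp add: algebra_simps)
      show ?thesis unfolding s PP_step[OF n2] P'_def by (rule gen)
    qed
    finally show ?thesis .
  qed
  then show ?case using finA by (simp add: n_def)
qed

lemma mainAA:
  assumes "finite L" "L \<noteq> {}" "\<forall>x\<in>L. 1 \<le> \<delta> x"
  shows "card (AA k \<delta> L m) = (m + card L - sum \<delta> L) * prod \<delta> L * PP k m (card L)"
proof -
  have each: "finite (AJ k \<delta> L m j) \<and> card (AJ k \<delta> L m j) = prod \<delta> L * PP k m (card L)"
    if "j < m + card L - sum \<delta> L" for j
    using mainAJ[OF assms] that by simp
  have "card (AA k \<delta> L m) = (\<Sum>j<m + card L - sum \<delta> L. card (AJ k \<delta> L m j))"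
    unfolding AA_Union[OF assms(1,2)] by (rule card_UN_disjoint) (use each AJ_disj in auto)
  also have "\<dots> = (m + card L - sum \<delta> L) * (prod \<delta> L * PP k m (card L))" using each by simp
  finally show ?thesis by simp
qed




theorem theorem3p5:
  fixes r :: "nat \<Rightarrow> nat" and k :: nat and S :: "nat \<Rightarrow> nat set"
  assumes "finite {d. r d \<noteq> 0}"
    and "n_of r \<ge> 1"
    and "ell_of r \<ge> 1"
    and "S \<in> V r"
  shows "int (card (CFS r k S)) =
           ell_of r * (\<Prod>d\<in>{d. 1 \<le> d \<and> r d \<noteq> 0}. int d ^ r d)
             * (\<Prod>i\<in>{1..n_of r - 1}. int (r 0 + i * (1 + k)))"
proof -
  define n where "n = n_of r"
  define L where "L = {1..n}"
  define m where "m = r 0"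
  define D1 where "D1 = {d. 1 \<le> d \<and> r d \<noteq> 0}"
  define \<delta> where "\<delta> x = (SOME d. 1 \<le> d \<and> x \<in> S d)" for x
  have finD1: "finite D1" using assms(1) by (auto simp: D1_def intro: finite_subset)
  have disj: "\<And>i j. 1 \<le> i \<Longrightarrow> 1 \<le> j \<Longrightarrow> i \<noteq> j \<Longrightarrow> S i \<inter> S j = {}"
    and un: "(\<Union>i\<in>{1..}. S i) = L" and cS: "\<And>i. 1 \<le> i \<Longrightarrow> card (S i) = r i"
    using assms(4) by (auto simp: V_def L_def n_def)
  have SL: "S i \<subseteq> L" if "1 \<le> i" for i using un that by auto
  have finS: "finite (S i)" if "1 \<le> i" for i using SL[OF that] finite_subset by (auto simp: L_def)
  have \<delta>1: "1 \<le> \<delta> x \<and> x \<in> S (\<delta> x)" if "x \<in> L" for x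
  proof -
    have "\<exists>d. 1 \<le> d \<and> x \<in> S d" using that un by auto
    then show ?thesis unfolding \<delta>_def by (rule someI_ex)
  qed
  have uniq: "\<delta> x = d" if "1 \<le> d" "x \<in> S d" for x d
  proof -
    have xL: "x \<in> L" using SL that by auto
    show ?thesis using disj[of "\<delta> x" d] \<delta>1[OF xL] that by auto
  qed
  have fib: "{x \<in> L. \<delta> x = d} = S d" if "1 \<le> d" for d
    using that SL uniq \<delta>1 by auto
  have finL: "finite L" and cL: "card L = n" by (auto simp: L_def)
  have Lne: "L \<noteq> {}" using assms(2) by (auto simp: L_def n_def)
  have pos: "\<forall>x\<in>L. 1 \<le> \<delta> x" using \<delta>1 by auto
  have img: "\<delta> ` L = D1"
  proof (intro set_eqI iffI)
    fix d assume "d \<in> \<delta> ` L"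
    then obtain x where x: "x \<in> L" "d = \<delta> x" by auto
    have "S d \<noteq> {}" using \<delta>1[OF x(1)] x by auto
    then have "r d \<noteq> 0" using cS[of d] finS[of d] \<delta>1[OF x(1)] x by auto
    then show "d \<in> D1" using \<delta>1[OF x(1)] x by (simp add: D1_def)
  next
    fix d assume "d \<in> D1"
    then have d: "1 \<le> d" "r d \<noteq> 0" by (auto simp: D1_def)
    then have "S d \<noteq> {}" using cS[of d] by auto
    then obtain x where "x \<in> S d" by auto
    then show "d \<in> \<delta> ` L" using uniq[OF d(1)] SL[OF d(1)] by (auto intro!: image_eqI[where x=x])
  qed
  have sumL: "sum \<delta> L = (\<Sum>d\<in>D1. d * r d)"
  proof -
    have "sum \<delta> L = (\<Sum>d\<in>\<delta> ` L. sum \<delta> {x. x \<in> L \<and> \<delta> x = d})"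
      using finL by (rule sum.image_gen)
    also have "\<dots> = (\<Sum>d\<in>D1. d * r d)"
    proof (rule sum.cong)
      fix d assume "d \<in> D1"
      then have d: "1 \<le> d" by (simp add: D1_def)
      have "sum \<delta> {x. x \<in> L \<and> \<delta> x = d} = sum (\<lambda>_. d) (S d)"
        using fib[OF d] by (intro sum.cong) auto
      then show "sum \<delta> {x. x \<in> L \<and> \<delta> x = d} = d * r d" using cS[OF d] by (simp add: mult.commute)
    qed (simp add: img)
    finally show ?thesis .
  qed
  have prodL: "prod \<delta> L = (\<Prod>d\<in>D1. d ^ r d)"
  proof -
    have "prod \<delta> L = (\<Prod>d\<in>\<delta> ` L. prod \<delta> {x. x \<in> L \<and> \<delta> x = d})"
      using finL by (rule prod.image_gen)
    also have "\<dots> = (\<Prod>d\<in>D1. d ^ r d)"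
    proof (rule prod.cong)
      fix d assume "d \<in> D1"
      then have d: "1 \<le> d" by (simp add: D1_def)
      have "prod \<delta> {x. x \<in> L \<and> \<delta> x = d} = prod (\<lambda>_. d) (S d)"
        using fib[OF d] by (intro prod.cong) auto
      then show "prod \<delta> {x. x \<in> L \<and> \<delta> x = d} = d ^ r d" using cS[OF d] by simp
    qed (simp add: img)
    finally show ?thesis .
  qed
  have nsum: "n = (\<Sum>d\<in>D1. r d)" by (simp add: n_def n_of_def D1_def)
  have ell: "ell_of r = int m + int n - int (sum \<delta> L)"
  proof -
    define f where "f d = (int d - 1) * int (r d)" for d
    have "(\<Sum>d\<in>{d. r d \<noteq> 0}. f d) = f 0 + (\<Sum>d\<in>D1. f d)"
    proof (cases "r 0 = 0")
      case True
      then have "{d. r d \<noteq> 0} = D1" by (auto simp: D1_def Suc_le_eq intro: Nat.gr0I)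
      then show ?thesis using True by (simp add: f_def)
    next
      case False
      then have e: "{d. r d \<noteq> 0} = insert 0 D1" by (auto simp: D1_def Suc_le_eq intro: Nat.gr0I)
      have "0 \<notin> D1" by (simp add: D1_def)
      then show ?thesis unfolding e using finD1 by simp
    qed
    also have "(\<Sum>d\<in>D1. f d) = int (\<Sum>d\<in>D1. d * r d) - int (\<Sum>d\<in>D1. r d)"
      by (simp add: f_def of_nat_sum sum_subtractf algebra_simps)
    finally show ?thesis unfolding ell_of_def sumL nsum m_def f_def[symmetric] by (simp add: f_def)
  qed
  have CFS_eq: "CFS r k S = AA k \<delta> L m"
  proof (intro set_eqI iffI)
    fix F assume "F \<in> CFS r k S"
    then have ht: "has_type r F" and il: "is_labelled n F" and ld: "leaves_dummy F"
      and col: "\<forall>v\<in>set (internal_vertices F). colour v \<in> allowed_colours k v"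
      and lab: "\<forall>v\<in>set (internal_vertices F). label v \<in> S (deg v)"
      by (auto simp: CFS_def CF_def n_def)
    have "\<forall>v\<in>set (internal_vertices F). deg v = \<delta> (label v)"
    proof
      fix v assume v: "v \<in> set (internal_vertices F)"
      then have "1 \<le> deg v" by (simp add: internal_vertices_def)
      then show "deg v = \<delta> (label v)" using uniq lab v by metis
    qed
    moreover have "leafcount F = m" using ht by (simp add: has_type_def leafcount_def m_def)
    ultimately show "F \<in> AA k \<delta> L m" using il ld col
      by (simp add: AA_def goodF_def is_labelled_def ivl_def L_def)
  next
    fix F assume "F \<in> AA k \<delta> L m"
    then have g: "goodF k \<delta> L m F" by (simp add: AA_def)
    then have dist: "distinct (ivl F)" and sL: "set (ivl F) = L"
      and dg: "\<forall>v\<in>set (internal_vertices F). deg v = \<delta> (label v)"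
      and lc: "leafcount F = m" and ld: "leaves_dummy F"
      and col: "\<forall>v\<in>set (internal_vertices F). colour v \<in> allowed_colours k v"
      by (auto simp: goodF_def)
    have ht: "has_type r F" unfolding has_type_def
    proof
      fix i
      show "length (filter (\<lambda>t. deg t = i) (forest_vertices F)) = r i"
      proof (cases "i = 0")
        case True then show ?thesis using lc by (simp add: leafcount_def m_def)
      next
        case False
        then have i1: "1 \<le> i" by simp
        have "filter (\<lambda>t. deg t = i) (forest_vertices F) = filter (\<lambda>t. deg t = i) (internal_vertices F)"
          unfolding internal_vertices_def filter_filter using i1 by (intro filter_cong) auto
        also have "\<dots> = filter (\<lambda>t. \<delta> (label t) = i) (internal_vertices F)"
          using dg by (intro filter_cong) auto
        finally have "length (filter (\<lambda>t. deg t = i) (forest_vertices F))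
            = length (filter (\<lambda>x. \<delta> x = i) (ivl F))"
          by (simp add: ivl_def filter_map comp_def)
        also have "\<dots> = card (set (filter (\<lambda>x. \<delta> x = i) (ivl F)))"
          using dist by (metis distinct_card distinct_filter)
        also have "set (filter (\<lambda>x. \<delta> x = i) (ivl F)) = {x \<in> L. \<delta> x = i}" using sL by auto
        also have "\<dots> = S i" by (rule fib[OF i1])
        finally show ?thesis using cS[OF i1] by simp
      qed
    qed
    have lab: "\<forall>v\<in>set (internal_vertices F). label v \<in> S (deg v)"
    proof
      fix v assume v: "v \<in> set (internal_vertices F)"
      then have "label v \<in> L" using sL by (auto simp: ivl_def)
      then show "label v \<in> S (deg v)" using \<delta>1 dg v by auto
    qed
    show "F \<in> CFS r k S" using ht dist sL ld col lab
      by (simp add: CFS_def CF_def is_labelled_def ivl_def L_def n_def)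
  qed
  have main: "card (AA k \<delta> L m) = (m + card L - sum \<delta> L) * prod \<delta> L * PP k m (card L)"
    by (rule mainAA[OF finL Lne pos])
  have le: "sum \<delta> L \<le> m + n" using ell assms(3) by linarith
  have "int (card (CFS r k S)) = int (m + n - sum \<delta> L) * int (prod \<delta> L) * int (PP k m n)"
    unfolding CFS_eq main cL by simp
  also have "int (m + n - sum \<delta> L) = ell_of r" using ell le by (simp add: of_nat_diff)
  also have "int (prod \<delta> L) = (\<Prod>d\<in>D1. int d ^ r d)" unfolding prodL by (simp add: of_nat_prod)
  also have "int (PP k m n) = (\<Prod>i\<in>{1..n_of r - 1}. int (r 0 + i * (1 + k)))"
    unfolding PP_def m_def n_def by (simp add: of_nat_prod)
  finally show ?thesis by (simp add: D1_def)
qed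


end
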